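(* Let $\epsilon\in[0,1]$ and let $\boldsymbol{g}_t,\boldsymbol{\mu}_t,\Delta_t\in\mathbb{R}^d$ satisfy $\boldsymbol{g}_t^\top\Delta_t>0$, $\boldsymbol{\mu}_t\perp\boldsymbol{g}_t$ and $\boldsymbol{\mu}_t\perp\Delta_t$. Then (whenever the denominators are nonzero) $$\frac{(1-\epsilon)\|\boldsymbol{g}_t\|^2+\boldsymbol{g}_t^\top\Delta_t}{\|(1-\epsilon)\boldsymbol{g}_t+\epsilon\boldsymbol{\mu}_t+\Delta_t\|}+\frac{(1-\epsilon)\|\boldsymbol{g}_t\|^2-\boldsymbol{g}_t^\top\Delta_t}{\|(1-\epsilon)\boldsymbol{g}_t+\epsilon\boldsymbol{\mu}_t-\Delta_t\|}\ge0.$$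
   Context: The condition $\boldsymbol{g}_t^\top\Delta_t>0$ means $\Delta_t$ lies in the open half-space $H_+=\{v:\boldsymbol{g}_t^\top v>0\}$. *)

theory Defs
  imports "HOL-Analysis.Analysis"
begin

end

theory Submission
  imports Defs
begin

lemma aux:
  fixes a G D M P x y S :: real
  assumes a: "a \<ge> 0" and D: "D > 0" and G: "G \<ge> 0" and M: "M \<ge> 0"
    and CS: "D^2 \<le> G * P" and e: "e\<^sup>2 \<ge> 0"
    and S: "S = a^2 * G + e^2 * M + P"
    and x: "x > 0" and y: "y > 0" and x2: "x^2 = S + 2*a*D" and y2: "y^2 = S - 2*a*D"
  shows "(a*G + D)/x + (a*G - D)/y \<ge> 0"
proof -
  have key: "(a*G+D)*y + (a*G-D)*x \<ge> 0"
  proof (cases "a*G - D \<ge> 0")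
    case True
    then show ?thesis using x y a G D by (simp add: add_nonneg_nonneg mult_nonneg_nonneg)
  next
    case False
    have diff: "((a*G+D)*y)^2 - ((D - a*G)*x)^2 = 4*a*D*(G*e^2*M + G*P - D^2)"
    proof -
      have "((a*G+D)*y)^2 - ((D - a*G)*x)^2 = (a*G+D)^2*y^2 - (D - a*G)^2*x^2"
        by (simp add: power_mult_distrib)
      also have "\<dots> = (a*G+D)^2*(S - 2*a*D) - (D - a*G)^2*(S + 2*a*D)" by (simp add: x2 y2)
      also have "\<dots> = 4*a*D*(G*e^2*M + G*P - D^2)" by (simp add: S power2_eq_square algebra_simps)
      finally show ?thesis .
    qed
    have "G*e^2*M \<ge> 0" using G M by simp
    hence h: "G*e^2*M + G*P - D^2 \<ge> 0" using CS by linarith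
    have "4*a*D*(G*e^2*M + G*P - D^2) \<ge> 0"
      using a D h by simp
    hence "((D - a*G)*x)^2 \<le> ((a*G+D)*y)^2" using diff by linarith
    moreover have "(a*G+D)*y \<ge> 0" using a G D y by (intro mult_nonneg_nonneg) auto
    ultimately have "(D - a*G)*x \<le> (a*G+D)*y" by (rule power2_le_imp_le)
    then show ?thesis by (simp add: algebra_simps)
  qed
  have "(a*G + D)/x + (a*G - D)/y = ((a*G+D)*y + (a*G-D)*x)/(x*y)"
    using x y by (simp add: field_simps)
  also have "\<dots> \<ge> 0" using key x y by simp
  finally show ?thesis .
qed

lemma nsq_add: fixes u d :: "'a::real_inner"
  shows "(norm (u + d))^2 = (norm u)^2 + (norm d)^2 + 2*(u \<bullet> d)"
  by (simp add: power2_norm_eq_inner inner_add_left inner_add_right inner_commute[of d u])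
lemma nsq_diff: fixes u d :: "'a::real_inner"
  shows "(norm (u - d))^2 = (norm u)^2 + (norm d)^2 - 2*(u \<bullet> d)"
  by (simp add: power2_norm_eq_inner inner_diff_left inner_diff_right inner_commute[of d u])

theorem lemma2:
  fixes g \<mu> \<Delta> :: "real ^ 'd" and \<epsilon> :: real
  assumes "0 \<le> \<epsilon>" and "\<epsilon> \<le> 1"
    and "g \<bullet> \<Delta> > 0"
    and "\<mu> \<bullet> g = 0" and "\<mu> \<bullet> \<Delta> = 0"
    and "norm ((1 - \<epsilon>) *\<^sub>R g + \<epsilon> *\<^sub>R \<mu> + \<Delta>) \<noteq> 0"
    and "norm ((1 - \<epsilon>) *\<^sub>R g + \<epsilon> *\<^sub>R \<mu> - \<Delta>) \<noteq> 0"
  shows "((1 - \<epsilon>) * (norm g)\<^sup>2 + g \<bullet> \<Delta>) / norm ((1 - \<epsilon>) *\<^sub>R g + \<epsilon> *\<^sub>R \<mu> + \<Delta>)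
       + ((1 - \<epsilon>) * (norm g)\<^sup>2 - g \<bullet> \<Delta>) / norm ((1 - \<epsilon>) *\<^sub>R g + \<epsilon> *\<^sub>R \<mu> - \<Delta>) \<ge> 0"
proof -
  let ?u = "(1 - \<epsilon>) *\<^sub>R g + \<epsilon> *\<^sub>R \<mu>"
  have mg: "\<mu> \<bullet> g = 0" "g \<bullet> \<mu> = 0" "\<Delta> \<bullet> \<mu> = 0" "\<mu> \<bullet> \<Delta> = 0"
    using assms by (auto simp: inner_commute)
  have CS: "(g \<bullet> \<Delta>)^2 \<le> (norm g)^2 * (norm \<Delta>)^2"
  proof -
    have "\<bar>g \<bullet> \<Delta>\<bar> \<le> norm g * norm \<Delta>" by (rule Cauchy_Schwarz_ineq2)
    hence "\<bar>g \<bullet> \<Delta>\<bar>^2 \<le> (norm g * norm \<Delta>)^2" by (intro power_mono) auto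
    thus ?thesis by (simp add: power_mult_distrib)
  qed
  have uu0: "?u \<bullet> ?u = (1-\<epsilon>)^2 * (g \<bullet> g) + \<epsilon>^2 * (\<mu> \<bullet> \<mu>)"
    using mg by (simp add: inner_add_left inner_add_right power2_eq_square algebra_simps)
  have uu: "?u \<bullet> ?u = (1-\<epsilon>)^2 * (norm g)^2 + \<epsilon>^2 * (norm \<mu>)^2"
    unfolding uu0 by (simp add: power2_norm_eq_inner)
  have ud: "?u \<bullet> \<Delta> = (1-\<epsilon>) * (g \<bullet> \<Delta>)"
    using mg by (simp add: inner_add_left)
  have nu: "(norm ?u)^2 = (1-\<epsilon>)^2 * (norm g)^2 + \<epsilon>^2 * (norm \<mu>)^2"
    using uu by (simp only: dot_square_norm)
  have ud2: "2*(?u \<bullet> \<Delta>) = 2*(1-\<epsilon>)*(g \<bullet> \<Delta>)" by (simp add: ud)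
  have x2: "(norm (?u + \<Delta>))^2 = ((1-\<epsilon>)^2 * (norm g)^2 + \<epsilon>^2 * (norm \<mu>)^2 + (norm \<Delta>)^2) + 2*(1-\<epsilon>)*(g \<bullet> \<Delta>)"
    proof -
    have "(norm (?u + \<Delta>))^2 = (norm ?u)^2 + (norm \<Delta>)^2 + 2*(?u \<bullet> \<Delta>)"
      by (rule nsq_add)
    thus ?thesis by (simp only: nu ud2)
  qed
  have y2: "(norm (?u - \<Delta>))^2 = ((1-\<epsilon>)^2 * (norm g)^2 + \<epsilon>^2 * (norm \<mu>)^2 + (norm \<Delta>)^2) - 2*(1-\<epsilon>)*(g \<bullet> \<Delta>)"
    proof -
    have "(norm (?u - \<Delta>))^2 = (norm ?u)^2 + (norm \<Delta>)^2 - 2*(?u \<bullet> \<Delta>)"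
      by (rule nsq_diff)
    thus ?thesis by (simp only: nu ud2)
  qed
  have "((1 - \<epsilon>) * (norm g)\<^sup>2 + g \<bullet> \<Delta>) / norm (?u + \<Delta>) + ((1 - \<epsilon>) * (norm g)\<^sup>2 - g \<bullet> \<Delta>) / norm (?u - \<Delta>) \<ge> 0"
    apply (rule aux[where e = \<epsilon> and M = "(norm \<mu>)^2" and P = "(norm \<Delta>)^2"
          and S = "(1-\<epsilon>)^2 * (norm g)^2 + \<epsilon>^2 * (norm \<mu>)^2 + (norm \<Delta>)^2"])
    using assms(1,2,3,6,7) CS x2 y2 by simp_all
  thus ?thesis by simp
qed

end
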